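(* Let $n,m$ be such that $\Gamma_{n,m}$ is defined, and consider a nearest-neighbour random walk on $\Gamma_{n,m}$ whose step distribution $\mu$ on $\{r_1,\dots,r_n\}$ satisfies $\mu(r_i)>0$ for all $1\le i\le n$. Let $g\in\Gamma_{n,m}$ be hyperbolic, i.e. there is a geodesic line $\xi\subset\mathbb{H}^2$ and $L>0$ with $d_{\mathbb{H}^2}(x,g.x)=L$ for all $x\in\xi$. Suppose $g=s_1\cdots s_{|g|}$ with each $s_j\in\{r_1,\dots,r_n\}$, where $|g|$ is the word length of $g$ with respect to $\{r_1,\dots,r_n\}$, and suppose \[ L > -\sum_{j=1}^{|g|}\log\mu(s_j). \] Then for any choice of base point $x_0\in\mathbb{H}^2$ (with trivial stabilizer) defining the geometric distance $d_{\mathbb{H}^2}$, \[ \sup_{k\ge 1}\,\bigl| d_\mu(e,g^k)-d_{\mathbb{H}^2}(e,g^k)\bigr| = \infty . \]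
   Context: $\Delta_{n,m}$ is a regular hyperbolic polygon with $n$ sides and interior angles $\frac{2\pi}{m}$ ($m\ge4$ even); $\Gamma_{n,m}$ is the group generated by the reflections $r_1,\dots,r_n$ in its sides. Geometric distance: for $x_0\in\mathbb{H}^2$ with trivial stabilizer, $d_{\mathbb{H}^2}(g,h)=d_{\mathbb{H}^2}(g.x_0,h.x_0)$. The random walk is $X_k=\xi_1\cdots\xi_k$, $X_0=e$, $\xi_i$ i.i.d. with law $\mu$. The first-entrance function is $F_\mu(x,y)=\mathbb{P}^e(\exists k: X_k=x^{-1}y)$ and the Green metric is $d_\mu(x,y)=-\log F_\mu(x,y)$. *)

theory Defs
  imports "HOL-Analysis.Analysis" "HOL-Probability.Probability"
begin

definition hdisk :: "complex set" where
  "hdisk = ball 0 1"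

definition hdist :: "complex \<Rightarrow> complex \<Rightarrow> real" where
  "hdist z w = arcosh (1 + 2 * (cmod (z - w))\<^sup>2 / ((1 - (cmod z)\<^sup>2) * (1 - (cmod w)\<^sup>2)))"

definition geodesic_line :: "complex set \<Rightarrow> bool" where
  "geodesic_line \<xi> \<longleftrightarrow>
     (\<exists>\<gamma>::real \<Rightarrow> complex. (\<forall>s. \<gamma> s \<in> hdisk) \<and>
        (\<forall>s t. hdist (\<gamma> s) (\<gamma> t) = \<bar>s - t\<bar>) \<and> \<xi> = range \<gamma>)"

definition h_isometry :: "(complex \<Rightarrow> complex) \<Rightarrow> bool" where
  "h_isometry f \<longleftrightarrow> f \<in> hdisk \<rightarrow>\<^sub>E hdisk \<and>
     (\<forall>z\<in>hdisk. \<forall>w\<in>hdisk. hdist (f z) (f w) = hdist z w)"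

definition h_id :: "complex \<Rightarrow> complex" where
  "h_id = restrict id hdisk"

definition geodesic_through :: "complex \<Rightarrow> complex \<Rightarrow> complex set" where
  "geodesic_through a b = (THE \<xi>. geodesic_line \<xi> \<and> a \<in> \<xi> \<and> b \<in> \<xi>)"

definition reflection_in :: "complex set \<Rightarrow> (complex \<Rightarrow> complex)" where
  "reflection_in \<xi> = (THE f. h_isometry f \<and> (\<forall>x\<in>\<xi>. f x = x) \<and> f \<noteq> h_id)"

text \<open>Gamma_{n,m} is defined: n \<ge> 3, m \<ge> 4 even, and a regular hyperbolic n-gon with
  interior angles 2 pi / m exists, i.e. n * 2pi/m < (n-2) pi, i.e. 1/n + 1/m < 1/2.\<close>
definition gamma_defined :: "nat \<Rightarrow> nat \<Rightarrow> bool" where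
  "gamma_defined n m \<longleftrightarrow> n \<ge> 3 \<and> m \<ge> 4 \<and> even m \<and> 1 / real n + 1 / real m < 1 / 2"

text \<open>Hyperbolic circumradius R of the regular n-gon with interior angle 2pi/m:
  cosh R = cot(pi/n) cot(pi/m) (right triangle centre / vertex / side midpoint).\<close>
definition circumradius :: "nat \<Rightarrow> nat \<Rightarrow> real" where
  "circumradius n m = arcosh (cot (pi / real n) * cot (pi / real m))"

text \<open>Vertices of \<Delta>_{n,m}, centred at the origin of the disk (Euclidean radius tanh(R/2)).\<close>
definition vertex :: "nat \<Rightarrow> nat \<Rightarrow> nat \<Rightarrow> complex" where
  "vertex n m k = complex_of_real (tanh (circumradius n m / 2)) * cis (2 * pi * real k / real n)"

text \<open>Reflection r_i (i = 0..n-1) in the i-th side, joining vertex i and vertex i+1.\<close>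
definition refl :: "nat \<Rightarrow> nat \<Rightarrow> nat \<Rightarrow> (complex \<Rightarrow> complex)" where
  "refl n m i = reflection_in (geodesic_through (vertex n m i) (vertex n m (Suc i)))"

definition word_elt :: "nat \<Rightarrow> nat \<Rightarrow> nat list \<Rightarrow> (complex \<Rightarrow> complex)" where
  "word_elt n m w = restrict (foldr (\<lambda>i f. refl n m i \<circ> f) w id) hdisk"

definition Gamma :: "nat \<Rightarrow> nat \<Rightarrow> (complex \<Rightarrow> complex) set" where
  "Gamma n m = word_elt n m ` lists {..<n}"

definition word_length :: "nat \<Rightarrow> nat \<Rightarrow> (complex \<Rightarrow> complex) \<Rightarrow> nat" where
  "word_length n m g = (LEAST l. \<exists>w\<in>lists {..<n}. length w = l \<and> word_elt n m w = g)"

definition gmult :: "(complex \<Rightarrow> complex) \<Rightarrow> (complex \<Rightarrow> complex) \<Rightarrow> (complex \<Rightarrow> complex)" where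
  "gmult g h = restrict (g \<circ> h) hdisk"

definition ginv :: "(complex \<Rightarrow> complex) \<Rightarrow> (complex \<Rightarrow> complex)" where
  "ginv g = restrict (inv_into hdisk g) hdisk"

definition gpow :: "(complex \<Rightarrow> complex) \<Rightarrow> nat \<Rightarrow> (complex \<Rightarrow> complex)" where
  "gpow g k = restrict (g ^^ k) hdisk"

definition trivial_stabilizer :: "nat \<Rightarrow> nat \<Rightarrow> complex \<Rightarrow> bool" where
  "trivial_stabilizer n m x0 \<longleftrightarrow> x0 \<in> hdisk \<and> (\<forall>h\<in>Gamma n m. h x0 = x0 \<longrightarrow> h = h_id)"

definition geom_dist :: "complex \<Rightarrow> (complex \<Rightarrow> complex) \<Rightarrow> (complex \<Rightarrow> complex) \<Rightarrow> real" where
  "geom_dist x0 g h = hdist (g x0) (h x0)"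

text \<open>Random walk with i.i.d. steps of law mu (on generator indices): X_k = word_elt of the
  first k steps. First-entrance function F_mu(x,y) = P(exists k. X_k = x^{-1} y).\<close>
definition first_entrance ::
  "nat \<Rightarrow> nat \<Rightarrow> nat pmf \<Rightarrow> (complex \<Rightarrow> complex) \<Rightarrow> (complex \<Rightarrow> complex) \<Rightarrow> real" where
  "first_entrance n m \<mu> x y =
     measure (stream_space (measure_pmf \<mu>))
       {\<omega> \<in> space (stream_space (measure_pmf \<mu>)). \<exists>k. word_elt n m (stake k \<omega>) = gmult (ginv x) y}"

definition green_dist ::
  "nat \<Rightarrow> nat \<Rightarrow> nat pmf \<Rightarrow> (complex \<Rightarrow> complex) \<Rightarrow> (complex \<Rightarrow> complex) \<Rightarrow> real" where
  "green_dist n m \<mu> x y = - ln (first_entrance n m \<mu> x y)"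

end

theory Submission
  imports Defs
begin

type_synonym v3 = "real \<times> real \<times> real"

definition mk :: "v3 \<Rightarrow> v3 \<Rightarrow> real" where
  "mk X Y = - (fst X * fst Y) + fst (snd X) * fst (snd Y) + snd (snd X) * snd (snd Y)"

definition cr :: "v3 \<Rightarrow> v3 \<Rightarrow> v3" where
  "cr X Y = (fst (snd X) * snd (snd Y) - snd (snd X) * fst (snd Y),
             snd (snd X) * fst Y - fst X * snd (snd Y),
             fst X * fst (snd Y) - fst (snd X) * fst Y)"

definition jf :: "v3 \<Rightarrow> v3" where "jf X = (- fst X, snd X)"

definition edot :: "v3 \<Rightarrow> v3 \<Rightarrow> real" where
  "edot X Y = fst X * fst Y + fst (snd X) * fst (snd Y) + snd (snd X) * snd (snd Y)"

lemma mk_expand: "mk (a,b,c) (d,e,f) = -(a*d) + b*e + c*f" by (simp add: mk_def)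
lemma mk_sym: "mk X Y = mk Y X" by (simp add: mk_def algebra_simps)
lemma mk_add1: "mk (X + Y) Z = mk X Z + mk Y Z" by (simp add: mk_def algebra_simps)
lemma mk_add2: "mk Z (X + Y) = mk Z X + mk Z Y" by (simp add: mk_def algebra_simps)
lemma mk_diff1: "mk (X - Y) Z = mk X Z - mk Y Z" by (simp add: mk_def algebra_simps)
lemma mk_diff2: "mk Z (X - Y) = mk Z X - mk Z Y" by (simp add: mk_def algebra_simps)
lemma mk_scale1: "mk (a *\<^sub>R X) Z = a * mk X Z" by (simp add: mk_def algebra_simps)
lemma mk_scale2: "mk Z (a *\<^sub>R X) = a * mk Z X" by (simp add: mk_def algebra_simps)
lemmas mk_lin = mk_add1 mk_add2 mk_diff1 mk_diff2 mk_scale1 mk_scale2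

lemma lagrange: "mk (jf (cr A B)) (jf (cr A B)) = (mk A B)^2 - mk A A * mk B B"
  by (cases A; cases B) (simp add: mk_def jf_def cr_def power2_eq_square algebra_simps)

lemma mk_jf_cr: "mk X (jf (cr A B)) = edot X (cr A B)"
  by (cases A; cases B; cases X) (simp add: mk_def jf_def cr_def edot_def algebra_simps)

lemma mk_N_A: "mk A (jf (cr A B)) = 0" "mk B (jf (cr A B)) = 0"
  by (cases A; cases B; simp add: mk_def jf_def cr_def algebra_simps)+

definition upper :: "v3 \<Rightarrow> bool" where "upper X \<longleftrightarrow> mk X X = -1 \<and> fst X > 0"

lemma spacelike_aux:
  fixes y0 y1 y2 p0 p1 p2 :: real
  assumes "p0^2 = 1 + p1^2 + p2^2" "y0*p0 = y1*p1 + y2*p2"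
  shows "p0^2 * (y1^2+y2^2-y0^2) = (y1^2+y2^2) + (y1*p2-y2*p1)^2"
proof -
  have "(y0*p0)^2 = (y1*p1 + y2*p2)^2" using assms(2) by simp
  then have "p0^2*y0^2 = (y1*p1 + y2*p2)^2" by (simp add: power_mult_distrib mult.commute)
  have "p0^2 * (y1^2+y2^2-y0^2) = p0^2*(y1^2+y2^2) - p0^2*y0^2" by (simp add: algebra_simps)
  also have "\<dots> = (1+p1^2+p2^2)*(y1^2+y2^2) - (y1*p1+y2*p2)^2" using assms(1) \<open>p0^2*y0^2 = _\<close> by simp
  also have "\<dots> = (y1^2+y2^2) + (y1*p2-y2*p1)^2" by (simp add: algebra_simps power2_eq_square)
  finally show ?thesis .
qed

lemma mk_orth_nonneg:
  assumes "mk P P = -1" "mk Y P = 0"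
  shows "mk Y Y \<ge> 0" and "Y \<noteq> 0 \<Longrightarrow> mk Y Y > 0"
proof -
  obtain p0 p1 p2 where P: "P = (p0,p1,p2)" by (cases P) auto
  obtain y0 y1 y2 where Y: "Y = (y0,y1,y2)" by (cases Y) auto
  have h1: "p0^2 = 1 + p1^2 + p2^2" using assms(1) by (simp add: P mk_def power2_eq_square)
  have h2: "y0*p0 = y1*p1 + y2*p2" using assms(2) by (simp add: P Y mk_def)
  have e: "p0^2 * (y1^2+y2^2-y0^2) = (y1^2+y2^2) + (y1*p2-y2*p1)^2"
    by (rule spacelike_aux[OF h1 h2])
  have sq: "p1^2 \<ge> 0" "p2^2 \<ge> 0" "y1^2 \<ge> 0" "y2^2 \<ge> 0" "(y1*p2-y2*p1)^2 \<ge> 0" by simp_all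
  have p0: "p0^2 > 0" using h1 sq by linarith
  have mY: "mk Y Y = y1^2+y2^2-y0^2" by (simp add: Y mk_def power2_eq_square)
  have "p0^2 * (y1^2+y2^2-y0^2) \<ge> 0" using e sq by linarith
  then show "mk Y Y \<ge> 0" using mY p0 by (simp add: zero_le_mult_iff)
  show "mk Y Y > 0" if "Y \<noteq> 0"
  proof (rule ccontr)
    assume "\<not> mk Y Y > 0"
    then have "p0^2 * (y1^2+y2^2-y0^2) \<le> 0" using mY p0 by (simp add: mult_le_0_iff)
    then have "y1^2+y2^2 = 0" using e sq by linarith
    then have "y1^2 = 0" "y2^2 = 0" using sq by linarith+
    then have "y1 = 0" "y2 = 0" by simp_all
    then have "y0 = 0" using h2 p0 by simp
    then show False using that \<open>y1 = 0\<close> \<open>y2 = 0\<close> by (simp add: Y zero_prod_def)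
  qed
qed

lemma cs2: "(x1*p1+x2*p2)^2 + (x1*p2 - x2*p1)^2 = (x1^2+x2^2)*(p1^2+p2^2)" for x1 x2 p1 p2 :: real
  by (simp add: power2_eq_square algebra_simps)

lemma sheet:
  assumes "mk X X = -1" "upper P"
  shows "fst X > 0 \<longleftrightarrow> mk X P < 0"
proof -
  obtain p0 p1 p2 where P: "P = (p0,p1,p2)" by (cases P) auto
  obtain x0 x1 x2 where X: "X = (x0,x1,x2)" by (cases X) auto
  have h1: "p0^2 = 1 + p1^2 + p2^2" "p0 > 0" using assms(2) by (auto simp: upper_def P mk_def power2_eq_square)
  have h2: "x0^2 = 1 + x1^2 + x2^2" using assms(1) by (simp add: X mk_def power2_eq_square)
  have sq: "p1^2 \<ge> 0" "p2^2 \<ge> 0" "x1^2 \<ge> 0" "x2^2 \<ge> 0" "(x1*p2-x2*p1)^2 \<ge> 0" by simp_all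
  have "(x1*p1+x2*p2)^2 \<le> (x1^2+x2^2)*(p1^2+p2^2)" using cs2[of x1 p1 x2 p2] sq by linarith
  also have "\<dots> = (x0^2-1)*(p0^2-1)" using h1 h2 by simp
  also have "\<dots> = (x0*p0)^2 - x0^2 - p0^2 + 1" by (simp add: algebra_simps power_mult_distrib)
  also have "\<dots> < (x0*p0)^2" using h1 h2 sq by linarith
  finally have "(x1*p1+x2*p2)^2 < (x0*p0)^2" .
  then have lt: "\<bar>x1*p1+x2*p2\<bar> < \<bar>x0*p0\<bar>" by (metis abs_ge_zero power2_abs power_less_imp_less_base)
  have mXP: "mk X P = -(x0*p0) + (x1*p1+x2*p2)" by (simp add: X P mk_def)
  have "x0^2 \<ge> 1" using h2 sq by linarith
  then have "x0 \<noteq> 0" by (auto)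
  show ?thesis
  proof
    assume "fst X > 0" then have "x0 > 0" by (simp add: X)
    then have "\<bar>x0*p0\<bar> = x0*p0" using h1 by simp
    then show "mk X P < 0" using lt mXP by linarith
  next
    assume "mk X P < 0"
    show "fst X > 0"
    proof (rule ccontr)
      assume "\<not> fst X > 0" then have "x0 < 0" using \<open>x0 \<noteq> 0\<close> by (simp add: X)
      then have "\<bar>x0*p0\<bar> = -(x0*p0)" using h1 by (simp add: abs_mult)
      then show False using lt mXP \<open>mk X P < 0\<close> by linarith
    qed
  qed
qed

lemma upper_ge1: assumes "upper X" shows "fst X \<ge> 1" "(fst X)^2 = 1 + (fst (snd X))^2 + (snd (snd X))^2"
proof -
  obtain x0 x1 x2 where X: "X = (x0,x1,x2)" by (cases X) auto
  have h: "x0^2 = 1 + x1^2 + x2^2" "x0 > 0" using assms by (auto simp: upper_def X mk_def power2_eq_square)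
  have "1^2 \<le> x0^2" using h by simp
  then have "1 \<le> x0" by (rule power2_le_imp_le) (use h in auto)
  then show "fst X \<ge> 1" by (simp add: X)
  show "(fst X)^2 = 1 + (fst (snd X))^2 + (snd (snd X))^2" using h by (simp add: X)
qed

lemma rev_cs:
  assumes "upper X" "upper P"
  shows "- mk X P \<ge> 1" and "- mk X P = 1 \<Longrightarrow> X = P"
proof -
  obtain p0 p1 p2 where P: "P = (p0,p1,p2)" by (cases P) auto
  obtain x0 x1 x2 where X: "X = (x0,x1,x2)" by (cases X) auto
  have h1: "p0^2 = 1 + p1^2 + p2^2" "p0 \<ge> 1" using upper_ge1[OF assms(2)] by (auto simp: P)
  have h2: "x0^2 = 1 + x1^2 + x2^2" "x0 \<ge> 1" using upper_ge1[OF assms(1)] by (auto simp: X)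
  define t where "t = x1*p1+x2*p2"
  have sq: "p1^2 \<ge> 0" "p2^2 \<ge> 0" "x1^2 \<ge> 0" "x2^2 \<ge> 0" "(x1*p2-x2*p1)^2 \<ge> 0" "(x0-p0)^2 \<ge> 0" by simp_all
  have "t^2 \<le> (x1^2+x2^2)*(p1^2+p2^2)" using cs2[of x1 p1 x2 p2] sq unfolding t_def by linarith
  also have "\<dots> = (x0^2-1)*(p0^2-1)" using h1 h2 by simp
  finally have tle: "t^2 \<le> (x0^2-1)*(p0^2-1)" .
  have id: "(x0*p0-1)^2 = (x0^2-1)*(p0^2-1) + (x0-p0)^2" by (simp add: algebra_simps power2_eq_square)
  have x0p0: "x0*p0 \<ge> 1" using h1 h2 by (metis mult_mono mult_1 zero_le_one order_trans)
  have "t^2 \<le> (x0*p0-1)^2" using tle id sq by linarith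
  then have "\<bar>t\<bar> \<le> x0*p0-1" using x0p0 by (metis abs_ge_zero power2_abs power2_le_imp_le diff_ge_0_iff_ge)
  moreover have mXP: "mk X P = -(x0*p0) + t" by (simp add: X P mk_def t_def)
  ultimately show "- mk X P \<ge> 1" by linarith
  assume eq: "- mk X P = 1"
  then have "t = x0*p0 - 1" using mXP by linarith
  then have "(x0-p0)^2 \<le> 0" using tle id by simp
  then have "x0 = p0" by simp
  have "(x1-p1)^2 + (x2-p2)^2 = (x1^2+x2^2) + (p1^2+p2^2) - 2*t" by (simp add: t_def power2_eq_square algebra_simps)
  also have "\<dots> = 0" using h1 h2 \<open>t = x0*p0 - 1\<close> \<open>x0 = p0\<close> by (simp add: power2_eq_square)
  finally have "(x1-p1)^2 + (x2-p2)^2 = 0" .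
  moreover have "(x1-p1)^2 \<ge> 0" "(x2-p2)^2 \<ge> 0" by simp_all
  ultimately have "(x1-p1)^2 = 0" "(x2-p2)^2 = 0" by linarith+
  then have "x1 = p1" "x2 = p2" by simp_all
  then show "X = P" using \<open>x0 = p0\<close> by (simp add: X P)
qed

lemma cs_orth:
  assumes "mk P P = -1" "mk U P = 0" "mk W P = 0"
  shows "(mk U W)^2 \<le> mk U U * mk W W"
proof (cases "W = 0")
  case True then show ?thesis by (simp add: mk_def zero_prod_def)
next
  case False
  have wpos: "mk W W > 0" using mk_orth_nonneg(2)[OF assms(1,3) False] .
  define t where "t = mk U W / mk W W"
  have "mk (U - t *\<^sub>R W) P = 0" using assms by (simp add: mk_lin)
  then have "mk (U - t *\<^sub>R W) (U - t *\<^sub>R W) \<ge> 0" using mk_orth_nonneg(1)[OF assms(1)] by blast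
  also have "mk (U - t *\<^sub>R W) (U - t *\<^sub>R W) = mk U U - (mk U W)^2 / mk W W"
    using wpos by (simp add: mk_lin t_def mk_sym[of W U] power2_eq_square field_simps)
  finally show ?thesis using wpos by (simp add: field_simps)
qed

lemma hyp_triangle:
  assumes "upper X" "upper Y" "upper Z"
  shows "arcosh (- mk X Z) \<le> arcosh (- mk X Y) + arcosh (- mk Y Z)"
proof -
  define \<alpha> where "\<alpha> = - mk X Y"
  define \<beta> where "\<beta> = - mk Y Z"
  have a1: "\<alpha> \<ge> 1" using rev_cs(1)[OF assms(1,2)] by (simp add: \<alpha>_def)
  have b1: "\<beta> \<ge> 1" using rev_cs(1)[OF assms(2,3)] by (simp add: \<beta>_def)
  have c1: "- mk X Z \<ge> 1" using rev_cs(1)[OF assms(1,3)] .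
  have YY: "mk Y Y = -1" using assms(2) by (simp add: upper_def)
  have XX: "mk X X = -1" using assms(1) by (simp add: upper_def)
  have ZZ: "mk Z Z = -1" using assms(3) by (simp add: upper_def)
  define X' where "X' = X - \<alpha> *\<^sub>R Y"
  define Z' where "Z' = Z - \<beta> *\<^sub>R Y"
  have o1: "mk X' Y = 0" using YY by (simp add: X'_def mk_lin \<alpha>_def)
  have o2: "mk Z' Y = 0" using YY by (simp add: Z'_def mk_lin \<beta>_def mk_sym[of Z Y])
  have n1: "mk X' X' = \<alpha>^2 - 1" using YY XX by (simp add: X'_def mk_lin \<alpha>_def mk_sym[of Y X] power2_eq_square)
  have n2: "mk Z' Z' = \<beta>^2 - 1" using YY ZZ by (simp add: Z'_def mk_lin \<beta>_def mk_sym[of Z Y] power2_eq_square)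
  have xz: "- mk X Z = \<alpha>*\<beta> - mk X' Z'" using YY
    by (simp add: X'_def Z'_def mk_lin \<alpha>_def \<beta>_def mk_sym[of Y X] mk_sym[of Z Y] algebra_simps)
  have "(mk X' Z')^2 \<le> (\<alpha>^2 - 1) * (\<beta>^2 - 1)" using cs_orth[OF YY o1 o2] n1 n2 by simp
  then have "\<bar>mk X' Z'\<bar> \<le> sqrt (\<alpha>^2 - 1) * sqrt (\<beta>^2 - 1)"
    by (metis real_sqrt_abs real_sqrt_le_mono real_sqrt_mult)
  then have le: "- mk X Z \<le> cosh (arcosh \<alpha>) * cosh (arcosh \<beta>) + sinh (arcosh \<alpha>) * sinh (arcosh \<beta>)"
    using a1 b1 xz by (simp add: sinh_arcosh_real)
  have "cosh (arcosh \<alpha> + arcosh \<beta>) \<ge> 1" by (simp add: cosh_real_ge_1)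
  have "\<not> (arcosh (cosh (arcosh \<alpha> + arcosh \<beta>)) < arcosh (- mk X Z))"
    using le c1 \<open>cosh _ \<ge> 1\<close> by (simp add: cosh_add)
  moreover have "arcosh (cosh (arcosh \<alpha> + arcosh \<beta>)) = arcosh \<alpha> + arcosh \<beta>"
    using a1 b1 by (intro arcosh_cosh_real) simp
  ultimately show ?thesis by (simp add: \<alpha>_def \<beta>_def)
qed

definition phi :: "complex \<Rightarrow> v3" where
  "phi z = ((1 + (cmod z)^2) / (1 - (cmod z)^2), 2 * Re z / (1 - (cmod z)^2), 2 * Im z / (1 - (cmod z)^2))"

definition psi :: "v3 \<Rightarrow> complex" where
  "psi X = Complex (fst (snd X) / (1 + fst X)) (snd (snd X) / (1 + fst X))"

lemma in_hdisk: "z \<in> hdisk \<longleftrightarrow> cmod z < 1" by (simp add: hdisk_def)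

lemma phi_alt: "phi z = (1 / (1 - (Re z ^2 + Im z^2))) *\<^sub>R (1 + (Re z ^2 + Im z^2), 2 * Re z, 2 * Im z)"
  by (simp add: phi_def cmod_power2)

lemma cmod_lt1: "cmod z < 1 \<Longrightarrow> Re z ^2 + Im z^2 < 1"
  by (metis cmod_power2 norm_ge_zero power_strict_mono one_power2 zero_less_numeral)

lemma phi_upper: assumes "cmod z < 1" shows "upper (phi z)"
proof -
  define a b where "a = Re z" "b = Im z"
  define r where "r = a^2+b^2"
  have lt: "r < 1" using cmod_lt1[OF assms] by (simp add: r_def a_b_def)
  have "mk (1 + r, 2 * a, 2 * b) (1 + r, 2 * a, 2 * b) = - ((1 - r) * (1 - r))"
    by (simp add: mk_def r_def power2_eq_square algebra_simps)
  moreover have "1 - r \<noteq> 0" using lt by simp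
  ultimately have "mk (phi z) (phi z) = -1"
    unfolding phi_alt a_b_def[symmetric] r_def[symmetric] mk_scale1 mk_scale2
    by (simp add: divide_eq_minus_1_iff)
  moreover have "fst (phi z) > 0" unfolding phi_alt a_b_def[symmetric] r_def[symmetric] using lt
    by (simp add: r_def add_pos_nonneg)
  ultimately show ?thesis by (simp add: upper_def)
qed

lemma phi_mk:
  assumes "cmod z < 1" "cmod w < 1"
  shows "- mk (phi z) (phi w) = 1 + 2 * (cmod (z - w))\<^sup>2 / ((1 - (cmod z)\<^sup>2) * (1 - (cmod w)\<^sup>2))"
proof -
  define a b c d where "a = Re z" "b = Im z" "c = Re w" "d = Im w"
  define r s where "r = a^2+b^2" "s = c^2+d^2"
  have lt: "r < 1" "s < 1" using cmod_lt1[OF assms(1)] cmod_lt1[OF assms(2)] by (simp_all add: r_s_def a_b_c_d_def)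
  have e1: "(cmod z)^2 = r" "(cmod w)^2 = s" "(cmod (z - w))^2 = (a-c)^2 + (b-d)^2"
    by (simp_all add: cmod_power2 r_s_def a_b_c_d_def)
  have nz: "1 - r \<noteq> 0" "1 - s \<noteq> 0" using lt by simp_all
  have A: "mk (1 + r, 2 * a, 2 * b) (1 + s, 2 * c, 2 * d) = (-((1+r)*(1+s)) + 4*(a*c+b*d))"
    by (simp add: mk_expand)
  have "mk (phi z) (phi w) = (1/(1-r)) * ((1/(1-s)) * (-((1+r)*(1+s)) + 4*(a*c+b*d)))"
    unfolding phi_alt a_b_c_d_def[symmetric] r_s_def[symmetric] mk_scale1 mk_scale2 A by (simp only: mult.left_commute)
  then have "- mk (phi z) (phi w) = (1/(1-r)) * ((1/(1-s)) * ((1+r)*(1+s) - 4*(a*c+b*d)))"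
    by (simp add: algebra_simps)
  also have "\<dots> = ((1+r)*(1+s) - 4*(a*c+b*d)) / ((1-r)*(1-s))" by simp
  also have "\<dots> = ((1-r)*(1-s) + 2 * ((a-c)^2 + (b-d)^2)) / ((1-r)*(1-s))"
    by (rule arg_cong[where f="\<lambda>x. x / _"]) (simp add: r_s_def power2_eq_square algebra_simps)
  also have "\<dots> = 1 + 2 * ((a-c)^2 + (b-d)^2) / ((1-r)*(1-s))"
    using nz by (simp add: add_divide_distrib)
  finally show ?thesis using e1 by simp
qed

lemma hdist_mk: "z \<in> hdisk \<Longrightarrow> w \<in> hdisk \<Longrightarrow> hdist z w = arcosh (- mk (phi z) (phi w))"
  by (simp add: hdist_def phi_mk in_hdisk)

lemma psi_phi: assumes "cmod z < 1" shows "psi (phi z) = z"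
proof -
  define a b where "a = Re z" "b = Im z"
  define r where "r = a^2+b^2"
  have lt: "r < 1" using cmod_lt1[OF assms] by (simp add: r_def a_b_def)
  have "1 + (1+r)/(1-r) = 2/(1-r)" using lt by (simp add: field_simps)
  then show ?thesis using lt unfolding psi_def phi_alt
    by (simp add: a_b_def[symmetric] r_def[symmetric] complex_eq_iff)
qed

lemma psi_props: assumes "upper X" shows "cmod (psi X) < 1" "phi (psi X) = X"
proof -
  obtain x0 x1 x2 where X: "X = (x0,x1,x2)" by (cases X) auto
  have h: "x0^2 = 1 + x1^2 + x2^2" "x0 \<ge> 1" using upper_ge1[OF assms] by (auto simp: X)
  have r: "Re (psi X)^2 + Im (psi X)^2 = (x0 - 1)/(x0 + 1)"
  proof -
    have "Re (psi X)^2 + Im (psi X)^2 = (x1^2+x2^2)/(1+x0)^2" by (simp add: psi_def X power_divide add_divide_distrib)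
    also have "\<dots> = (x0^2 - 1)/(1+x0)^2" using h by simp
    also have "\<dots> = ((x0 - 1)*(x0+1))/((x0 + 1)*(x0+1))" by (simp add: power2_eq_square algebra_simps)
    also have "\<dots> = (x0 - 1)/(x0 + 1)" using h(2) by (intro nonzero_mult_divide_mult_cancel_right) simp
    finally show ?thesis .
  qed
  have lt: "(x0 - 1)/(x0 + 1) < 1" using h by simp
  show "cmod (psi X) < 1" using r lt
    by (metis cmod_power2 norm_ge_zero power_less_imp_less_base zero_le_one one_power2)
  have d: "1 - (x0 - 1)/(x0 + 1) = 2/(x0+1)" "1 + (x0 - 1)/(x0 + 1) = 2*x0/(x0+1)" using h by (simp_all add: field_simps)
  have e: "1 / (2/(x0+1)) = (x0+1)/2" by simp
  have "phi (psi X) = (1 / (1 - (x0 - 1)/(x0 + 1))) *\<^sub>R (1 + (x0 - 1)/(x0 + 1), 2 * Re (psi X), 2 * Im (psi X))"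
    by (simp only: phi_alt r)
  also have "\<dots> = ((x0+1)/2) *\<^sub>R (2*x0/(x0+1), 2 * (x1/(1+x0)), 2*(x2/(1+x0)))"
    by (simp only: d e) (simp add: psi_def X)
  also have "\<dots> = X" using h by (simp add: X field_simps)
  finally show "phi (psi X) = X" .
qed

definition frame :: "v3 \<Rightarrow> v3 \<Rightarrow> bool" where
  "frame p v \<longleftrightarrow> upper p \<and> mk v v = 1 \<and> mk p v = 0"

definition cv :: "v3 \<Rightarrow> v3 \<Rightarrow> real \<Rightarrow> v3" where
  "cv p v s = cosh s *\<^sub>R p + sinh s *\<^sub>R v"

lemma ch2: "cosh x * cosh x - sinh x * sinh x = (1::real)"
  using cosh_square_eq[of x] by (simp add: power2_eq_square)

lemma cv_mk: assumes "frame p v" shows "mk (cv p v s) (cv p v t) = - cosh (s - t)"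
proof -
  have "mk p p = -1" "mk v v = 1" "mk p v = 0" "mk v p = 0" using assms by (auto simp: frame_def upper_def mk_sym)
  then show ?thesis by (simp add: cv_def mk_lin cosh_diff algebra_simps)
qed

lemma cv_mk_p: assumes "frame p v" shows "mk (cv p v s) p = - cosh s"
proof -
  have "mk p p = -1" "mk v v = 1" "mk p v = 0" "mk v p = 0" using assms by (auto simp: frame_def upper_def mk_sym)
  then show ?thesis by (simp add: cv_def mk_lin)
qed

lemma cv_upper: assumes "frame p v" shows "upper (cv p v s)"
proof -
  have m: "mk (cv p v s) (cv p v s) = -1" using cv_mk[OF assms, of s s] by simp
  have "upper p" using assms by (simp add: frame_def)
  have "mk (cv p v s) p < 0" using cv_mk_p[OF assms] by (simp add: cosh_real_pos)
  then have "fst (cv p v s) > 0" using sheet[OF m \<open>upper p\<close>] by simp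
  then show ?thesis using m by (simp add: upper_def)
qed

lemma curve_is_cv:
  fixes P :: "real \<Rightarrow> v3"
  assumes mkP: "\<And>s t. mk (P s) (P t) = - cosh (s - t)" and up: "upper (P 0)"
  defines "v \<equiv> (1 / sinh 1) *\<^sub>R (P 1 - cosh 1 *\<^sub>R P 0)"
  shows "frame (P 0) v" "\<And>s. P s = cv (P 0) v s"
proof -
  define p where "p = P 0"
  have sh: "sinh (1::real) \<noteq> 0" by simp
  have pp: "mk p p = -1" using mkP[of 0 0] by (simp add: p_def)
  have p1: "mk (P 1) p = - cosh 1" "mk p (P 1) = - cosh 1" using mkP[of 1 0] mkP[of 0 1] by (simp_all add: p_def)
  have 11: "mk (P 1) (P 1) = -1" using mkP[of 1 1] by simp
  have vp: "mk v p = 0" using pp p1 by (simp add: v_def p_def[symmetric] mk_lin)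
  have vv: "mk v v = 1"
  proof -
    have "mk v v = (1 / sinh 1)^2 * (mk (P 1) (P 1) - 2 * cosh 1 * mk (P 1) p + (cosh 1)^2 * mk p p)"
      using p1 by (simp add: v_def p_def[symmetric] mk_lin power2_eq_square algebra_simps)
    also have "\<dots> = (1 / sinh 1)^2 * ((cosh 1)^2 - 1)" using 11 p1 pp by (simp add: algebra_simps power2_eq_square)
    also have "\<dots> = 1" using sh by (simp add: cosh_square_eq power_divide)
    finally show ?thesis .
  qed
  show fr: "frame (P 0) v" using up vv vp by (simp add: frame_def p_def[symmetric] mk_sym[of p v])
  fix s
  have sv: "mk (P s) v = sinh s"
  proof -
    have "mk (P s) v = (1 / sinh 1) * (- cosh (s - 1) + cosh 1 * cosh s)"
      using mkP[of s 1] mkP[of s 0] by (simp add: v_def p_def[symmetric] mk_lin)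
    also have "\<dots> = sinh s" using sh by (simp add: cosh_diff)
    finally show ?thesis .
  qed
  have sp: "mk (P s) p = - cosh s" using mkP[of s 0] by (simp add: p_def)
  define Y where "Y = P s - cv p v s"
  have "mk Y p = 0" using sp pp vp by (simp add: Y_def cv_def mk_lin)
  moreover have "mk Y Y = 0"
  proof -
    have c: "mk (cv p v s) (cv p v s) = -1" using cv_mk[OF fr[folded p_def], of s s] by simp
    have "mk Y Y = mk (P s) (P s) - 2 * mk (P s) (cv p v s) + mk (cv p v s) (cv p v s)"
      by (simp add: Y_def mk_lin mk_sym[of "cv p v s" "P s"])
    also have "mk (P s) (cv p v s) = cosh s * mk (P s) p + sinh s * mk (P s) v" by (simp add: cv_def mk_lin)
    finally show ?thesis using c sp sv mkP[of s s] ch2[of s] by (simp add: algebra_simps)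
  qed
  ultimately have "Y = 0" using mk_orth_nonneg(2)[OF pp, of Y] by (cases "Y = 0") auto
  then show "P s = cv (P 0) v s" by (simp add: Y_def p_def)
qed

lemma edot_lin: "edot (X + Y) Z = edot X Z + edot Y Z" "edot (X - Y) Z = edot X Z - edot Y Z"
  "edot (a *\<^sub>R X) Z = a * edot X Z"
  by (simp_all add: edot_def algebra_simps)

lemma triple0: "edot A (cr A B) = 0" "edot B (cr A B) = 0"
  by (simp_all add: edot_def cr_def algebra_simps)

lemma edot_jf: "edot (jf w) w = mk w w" "mk (jf w) (jf w) = mk w w" "edot (jf Y) A = mk Y A"
  by (simp_all add: edot_def jf_def mk_def)

lemma orth_line:
  assumes "mk Y A = 0" "mk Y B = 0"
  shows "edot (cr A B) (cr A B) *\<^sub>R Y = edot (jf Y) (cr A B) *\<^sub>R jf (cr A B)"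
proof -
  obtain a0 a1 a2 where A: "A = (a0,a1,a2)" by (cases A) auto
  obtain b0 b1 b2 where B: "B = (b0,b1,b2)" by (cases B) auto
  obtain y0 y1 y2 where Y: "Y = (y0,y1,y2)" by (cases Y) auto
  have h1: "-y0*a0 + y1*a1 + y2*a2 = 0" using assms(1) by (simp add: A Y mk_def)
  have h2: "-y0*b0 + y1*b1 + y2*b2 = 0" using assms(2) by (simp add: B Y mk_def)
  show ?thesis using h1 h2 unfolding A B Y edot_def cr_def jf_def
    by simp (intro conjI; algebra)
qed

lemma edot_pos: "w \<noteq> 0 \<Longrightarrow> edot w w > 0"
proof -
  assume "w \<noteq> 0"
  obtain a b c where w: "w = (a,b,c)" by (cases w) auto
  have "a \<noteq> 0 \<or> b \<noteq> 0 \<or> c \<noteq> 0" using \<open>w \<noteq> 0\<close> by (auto simp: w zero_prod_def)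
  moreover have "a*a \<ge> 0" "b*b \<ge> 0" "c*c \<ge> 0" by simp_all
  moreover have "a \<noteq> 0 \<longrightarrow> a*a > 0" "b \<noteq> 0 \<longrightarrow> b*b > 0" "c \<noteq> 0 \<longrightarrow> c*c > 0" using not_real_square_gt_zero by blast+
  ultimately have "a*a + b*b + c*c > 0" by linarith
  then show ?thesis by (simp add: edot_def w)
qed

lemma frame_N: assumes "frame p v" shows "mk (jf (cr p v)) (jf (cr p v)) = 1" "cr p v \<noteq> 0"
proof -
  have "mk p p = -1" "mk v v = 1" "mk p v = 0" using assms by (auto simp: frame_def upper_def)
  then show "mk (jf (cr p v)) (jf (cr p v)) = 1" by (simp add: lagrange)
  then show "cr p v \<noteq> 0" by (auto simp: jf_def mk_def zero_prod_def)
qed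

lemma plane_cv:
  assumes fr: "frame p v" and up: "upper X" and d: "edot X (cr p v) = 0"
  shows "\<exists>s. X = cv p v s"
proof -
  have pp: "mk p p = -1" and vv: "mk v v = 1" and pv: "mk p v = 0" "mk v p = 0"
    using fr by (auto simp: frame_def upper_def mk_sym)
  define Y where "Y = X + mk X p *\<^sub>R p - mk X v *\<^sub>R v"
  have Yp: "mk Y p = 0" using pp pv by (simp add: Y_def mk_lin)
  have Yv: "mk Y v = 0" using vv pv by (simp add: Y_def mk_lin)
  have Yd: "edot Y (cr p v) = 0" using d by (simp add: Y_def edot_lin triple0)
  define w where "w = cr p v"
  have e: "edot w w *\<^sub>R Y = edot (jf Y) w *\<^sub>R jf w" using orth_line[OF Yp Yv] by (simp add: w_def)
  have "edot w w * edot Y w = edot (jf Y) w * edot (jf w) w"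
    using arg_cong[OF e, of "\<lambda>Z. edot Z w"] by (simp add: edot_lin)
  then have "edot (jf Y) w = 0" using Yd frame_N[OF fr] by (simp add: w_def edot_jf)
  then have "edot w w *\<^sub>R Y = 0" using e by simp
  then have Y0: "Y = 0" using edot_pos[of w] frame_N(2)[OF fr] by (simp add: w_def)
  define \<alpha> \<beta> where "\<alpha> = - mk X p" "\<beta> = mk X v"
  have X: "X = \<alpha> *\<^sub>R p + \<beta> *\<^sub>R v" using Y0 unfolding Y_def \<alpha>_\<beta>_def
    by (simp add: algebra_simps eq_diff_eq)
  have "mk X X = -1" using up by (simp add: upper_def)
  then have "\<beta>^2 - \<alpha>^2 = -1" unfolding X using pp vv pv by (simp add: mk_lin power2_eq_square)
  then have a2: "\<alpha>^2 = \<beta>^2 + 1" by simp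
  have "\<alpha> \<ge> 1" using rev_cs(1)[OF up] fr by (simp add: frame_def \<alpha>_\<beta>_def)
  then have "\<alpha> = sqrt (\<beta>^2 + 1)" using a2 by (metis abs_of_nonneg real_sqrt_abs order_trans zero_le_one)
  then have "X = cv p v (arsinh \<beta>)" by (simp add: X cv_def cosh_arsinh_real)
  then show ?thesis ..
qed

definition PL :: "complex \<Rightarrow> complex \<Rightarrow> complex set" where
  "PL A B = {z \<in> hdisk. edot (phi z) (cr (phi A) (phi B)) = 0}"

lemma cosh_abs_real: "cosh \<bar>x\<bar> = cosh (x::real)"
  by (cases "x \<ge> 0") (auto simp: cosh_minus)

lemma phi_inj: "cmod z < 1 \<Longrightarrow> cmod w < 1 \<Longrightarrow> phi z = phi w \<Longrightarrow> z = w"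
  by (metis psi_phi)

lemma hdist_iso_mk:
  assumes "z \<in> hdisk" "w \<in> hdisk" "hdist z w = d"
  shows "- mk (phi z) (phi w) = cosh d"
proof -
  have "- mk (phi z) (phi w) \<ge> 1" using rev_cs(1)[OF phi_upper phi_upper] assms by (simp add: in_hdisk)
  then have "cosh (arcosh (- mk (phi z) (phi w))) = - mk (phi z) (phi w)" by (rule cosh_arcosh_real)
  then show ?thesis using assms(3) hdist_mk[OF assms(1,2)] by simp
qed

lemma geo_param:
  assumes "\<forall>s. \<gamma> s \<in> hdisk" "\<forall>s t. hdist (\<gamma> s) (\<gamma> t) = \<bar>s - t\<bar>"
  shows "\<exists>p v. frame p v \<and> (\<forall>s. phi (\<gamma> s) = cv p v s)"
proof -
  have "mk (phi (\<gamma> s)) (phi (\<gamma> t)) = - cosh (s - t)" for s t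
  proof -
    have "- mk (phi (\<gamma> s)) (phi (\<gamma> t)) = cosh \<bar>s - t\<bar>"
      using assms by (intro hdist_iso_mk) auto
    then show ?thesis by (simp add: cosh_abs_real)
  qed
  moreover have "upper (phi (\<gamma> 0))" using assms phi_upper in_hdisk by blast
  ultimately show ?thesis using curve_is_cv[of "\<lambda>s. phi (\<gamma> s)"] by blast
qed

lemma edot_scale2: "edot X (c *\<^sub>R w) = c * edot X w" by (simp add: edot_def algebra_simps)

lemma cr_comb: "cr (a *\<^sub>R p + b *\<^sub>R v) (c *\<^sub>R p + d *\<^sub>R v) = (a*d - b*c) *\<^sub>R cr p v"
  by (cases p; cases v) (simp add: cr_def algebra_simps)

lemma cv_set_plane:
  assumes fr: "frame p v"
  shows "{z \<in> hdisk. \<exists>s. phi z = cv p v s} = {z \<in> hdisk. edot (phi z) (cr p v) = 0}"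
proof (intro set_eqI iffI)
  fix z assume "z \<in> {z \<in> hdisk. \<exists>s. phi z = cv p v s}"
  then obtain s where "z \<in> hdisk" "phi z = cv p v s" by auto
  then show "z \<in> {z \<in> hdisk. edot (phi z) (cr p v) = 0}" by (simp add: cv_def edot_lin triple0)
next
  fix z assume "z \<in> {z \<in> hdisk. edot (phi z) (cr p v) = 0}"
  then show "z \<in> {z \<in> hdisk. \<exists>s. phi z = cv p v s}"
    using plane_cv[OF fr phi_upper] in_hdisk by auto
qed

lemma geo_unique:
  assumes "geodesic_line \<xi>" "A \<in> \<xi>" "B \<in> \<xi>" "A \<noteq> B"
  shows "\<xi> = PL A B"
proof -
  obtain \<gamma> where g: "\<forall>s. \<gamma> s \<in> hdisk" "\<forall>s t. hdist (\<gamma> s) (\<gamma> t) = \<bar>s - t\<bar>" "\<xi> = range \<gamma>"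
    using assms(1) unfolding geodesic_line_def by blast
  obtain p v where fr: "frame p v" and pc: "\<forall>s. phi (\<gamma> s) = cv p v s" using geo_param[OF g(1,2)] by blast
  have "\<xi> = {z \<in> hdisk. \<exists>s. phi z = cv p v s}"
  proof (intro set_eqI iffI)
    fix z assume "z \<in> \<xi>" then show "z \<in> {z \<in> hdisk. \<exists>s. phi z = cv p v s}" using g pc by auto
  next
    fix z assume "z \<in> {z \<in> hdisk. \<exists>s. phi z = cv p v s}"
    then obtain s where "z \<in> hdisk" "phi z = cv p v s" by auto
    then have "z = \<gamma> s" using pc g(1) phi_inj[of z "\<gamma> s"] in_hdisk by simp
    then show "z \<in> \<xi>" using g(3) by simp
  qed
  also have "\<dots> = {z \<in> hdisk. edot (phi z) (cr p v) = 0}" by (rule cv_set_plane[OF fr])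
  finally have xi: "\<xi> = {z \<in> hdisk. edot (phi z) (cr p v) = 0}" .
  obtain a b where ab: "A = \<gamma> a" "B = \<gamma> b" using assms(2,3) g(3) by auto
  have "a \<noteq> b" using ab assms(4) by auto
  then have sh: "sinh (b - a) \<noteq> 0" by simp
  have "cr (phi A) (phi B) = sinh (b - a) *\<^sub>R cr p v"
    using pc ab by (simp add: cv_def cr_comb sinh_diff algebra_simps)
  then have "\<And>z. edot (phi z) (cr (phi A) (phi B)) = sinh (b - a) * edot (phi z) (cr p v)"
    by (simp add: edot_scale2)
  then show ?thesis using xi sh by (auto simp: PL_def)
qed

lemma geo_exists:
  assumes "A \<in> hdisk" "B \<in> hdisk" "A \<noteq> B"
  shows "geodesic_line (PL A B)" "A \<in> PL A B" "B \<in> PL A B"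
proof -
  define p where "p = phi A"
  define \<alpha> where "\<alpha> = - mk (phi A) (phi B)"
  have upA: "upper p" "upper (phi B)" using assms phi_upper in_hdisk p_def by auto
  have "\<alpha> \<ge> 1" using rev_cs(1)[OF upA] by (simp add: \<alpha>_def p_def mk_sym)
  moreover have "\<alpha> \<noteq> 1"
  proof
    assume "\<alpha> = 1"
    then have "phi B = p" using rev_cs(2)[OF upA(2,1)] by (simp add: \<alpha>_def p_def mk_sym)
    then show False using assms phi_inj[of A B] in_hdisk by (simp add: p_def)
  qed
  ultimately have a1: "\<alpha> > 1" by simp
  define d where "d = arcosh \<alpha>"
  have cd: "cosh d = \<alpha>" using a1 by (simp add: d_def)
  have sd: "sinh d = sqrt (\<alpha>^2 - 1)" using a1 by (simp add: d_def sinh_arcosh_real)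
  have "1*1 < \<alpha>*\<alpha>" by (rule mult_strict_mono) (use a1 in auto)
  then have sdp: "sinh d > 0" using sd by (simp add: power2_eq_square)
  define v where "v = (1 / sinh d) *\<^sub>R (phi B - \<alpha> *\<^sub>R p)"
  have pp: "mk p p = -1" "mk (phi B) (phi B) = -1" using upA by (auto simp: upper_def)
  have Bp: "mk (phi B) p = - \<alpha>" "mk p (phi B) = - \<alpha>" by (simp_all add: \<alpha>_def p_def mk_sym)
  have vp: "mk p v = 0" using pp Bp by (simp add: v_def mk_lin)
  have vv: "mk v v = 1"
  proof -
    have "mk v v = (1 / sinh d)^2 * (\<alpha>^2 - 1)" using pp Bp
      by (simp add: v_def mk_lin power2_eq_square algebra_simps) (simp add: add_divide_distrib[symmetric])
    also have "\<dots> = 1" using sd sdp \<open>1*1 < \<alpha>*\<alpha>\<close> by (simp add: power_divide power2_eq_square)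
    finally show ?thesis .
  qed
  have fr: "frame p v" using upA vv vp by (simp add: frame_def)
  define \<gamma> where "\<gamma> s = psi (cv p v s)" for s
  have gd: "\<gamma> s \<in> hdisk" for s using psi_props(1)[OF cv_upper[OF fr]] by (simp add: \<gamma>_def in_hdisk)
  have gp: "phi (\<gamma> s) = cv p v s" for s using psi_props(2)[OF cv_upper[OF fr]] by (simp add: \<gamma>_def)
  have "hdist (\<gamma> s) (\<gamma> t) = \<bar>s - t\<bar>" for s t
  proof -
    have "hdist (\<gamma> s) (\<gamma> t) = arcosh (cosh \<bar>s - t\<bar>)" using hdist_mk[OF gd gd] gp cv_mk[OF fr] cosh_abs_real by simp
    then show ?thesis using arcosh_cosh_real[of "\<bar>s - t\<bar>"] by (simp add: cosh_abs_real)
  qed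
  then have geo: "geodesic_line (range \<gamma>)" unfolding geodesic_line_def using gd by blast
  have "\<gamma> 0 = A" using psi_phi assms(1) in_hdisk by (simp add: \<gamma>_def cv_def p_def)
  moreover have "cv p v d = phi B" using sdp by (simp add: cv_def v_def cd)
  then have "\<gamma> d = B" using psi_phi assms(2) in_hdisk by (simp add: \<gamma>_def)
  ultimately have AB: "A \<in> range \<gamma>" "B \<in> range \<gamma>" by (auto intro: range_eqI)
  have "range \<gamma> = PL A B" by (rule geo_unique[OF geo AB assms(3)])
  then show "geodesic_line (PL A B)" "A \<in> PL A B" "B \<in> PL A B" using geo AB by auto
qed

lemma geodesic_through_eq:
  assumes "A \<in> hdisk" "B \<in> hdisk" "A \<noteq> B"
  shows "geodesic_through A B = PL A B"
  unfolding geodesic_through_def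
proof (rule the_equality)
  show "geodesic_line (PL A B) \<and> A \<in> PL A B \<and> B \<in> PL A B" using geo_exists[OF assms] by blast
  fix \<xi> assume "geodesic_line \<xi> \<and> A \<in> \<xi> \<and> B \<in> \<xi>"
  then show "\<xi> = PL A B" using geo_unique assms(3) by blast
qed

definition NN :: "complex \<Rightarrow> complex \<Rightarrow> v3" where "NN A B = jf (cr (phi A) (phi B))"

definition sig :: "complex \<Rightarrow> complex \<Rightarrow> v3 \<Rightarrow> v3" where
  "sig A B X = X - (2 * mk X (NN A B) / mk (NN A B) (NN A B)) *\<^sub>R NN A B"

definition rfl :: "complex \<Rightarrow> complex \<Rightarrow> complex \<Rightarrow> complex" where
  "rfl A B = restrict (\<lambda>z. psi (sig A B (phi z))) hdisk"

locale two_pts =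
  fixes A B :: complex
  assumes A: "A \<in> hdisk" and B: "B \<in> hdisk" and AB: "A \<noteq> B"
begin

lemma upA: "upper (phi A)" "upper (phi B)" using A B phi_upper in_hdisk by auto

lemma NN_pos: "mk (NN A B) (NN A B) > 0"
proof -
  have "- mk (phi A) (phi B) \<ge> 1" using rev_cs(1)[OF upA] .
  moreover have "- mk (phi A) (phi B) \<noteq> 1"
  proof
    assume "- mk (phi A) (phi B) = 1"
    then have "phi A = phi B" using rev_cs(2)[OF upA] by simp
    then show False using A B AB phi_inj in_hdisk by blast
  qed
  ultimately have gt: "- mk (phi A) (phi B) > 1" by simp
  then have "1 * 1 < (- mk (phi A) (phi B)) * (- mk (phi A) (phi B))" by (intro mult_strict_mono) auto
  then show ?thesis using upA by (simp add: NN_def lagrange upper_def power2_eq_square)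
qed

lemma NN_orth: "mk (phi A) (NN A B) = 0" "mk (phi B) (NN A B) = 0"
  by (simp_all add: NN_def mk_N_A)

lemma sig_mk: "mk (sig A B X) (sig A B Y) = mk X Y"
  using NN_pos by (simp add: sig_def mk_lin mk_sym[of "NN A B" Y] field_simps)

lemma sig_mkA: "mk (sig A B X) (phi A) = mk X (phi A)"
  using NN_orth by (simp add: sig_def mk_lin mk_sym[of "NN A B" "phi A"])

lemma sig_upper: assumes "upper X" shows "upper (sig A B X)"
proof -
  have m: "mk (sig A B X) (sig A B X) = -1" using assms by (simp add: sig_mk upper_def)
  have "fst X > 0" using assms by (simp add: upper_def)
  then have "mk X (phi A) < 0" using sheet[OF _ upA(1)] assms by (simp add: upper_def)
  then have "mk (sig A B X) (phi A) < 0" by (simp add: sig_mkA)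
  then show ?thesis using sheet[OF m upA(1)] m by (simp add: upper_def)
qed

lemma rfl_in: "z \<in> hdisk \<Longrightarrow> rfl A B z \<in> hdisk \<and> phi (rfl A B z) = sig A B (phi z)"
  using psi_props[OF sig_upper[OF phi_upper]] by (simp add: rfl_def in_hdisk)

lemma rfl_iso: "h_isometry (rfl A B)"
  unfolding h_isometry_def
proof (intro conjI ballI)
  show "rfl A B \<in> hdisk \<rightarrow>\<^sub>E hdisk" using rfl_in by (auto simp: rfl_def)
  fix z w assume "z \<in> hdisk" "w \<in> hdisk"
  then show "hdist (rfl A B z) (rfl A B w) = hdist z w"
    using rfl_in hdist_mk by (simp add: sig_mk)
qed

lemma sig_fix: "mk X (NN A B) = 0 \<Longrightarrow> sig A B X = X" by (simp add: sig_def)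

lemma rfl_fix: "z \<in> PL A B \<Longrightarrow> rfl A B z = z"
  unfolding PL_def using sig_fix psi_phi in_hdisk
  by (auto simp: rfl_def NN_def mk_jf_cr)

lemma rfl_not_id: "rfl A B \<noteq> h_id"
proof -
  obtain n0 n1 n2 where N: "NN A B = (n0,n1,n2)" by (cases "NN A B") auto
  have "NN A B \<noteq> 0" using NN_pos by (auto simp: mk_def zero_prod_def)
  have p0: "phi 0 = (1,0,0)" by (simp add: phi_def)
  have p1: "phi (1/2) = (5/3, 4/3, 0)" by (simp add: phi_def power2_eq_square)
  have p2: "phi (\<i>/2) = (5/3, 0, 4/3)" by (simp add: phi_def power2_eq_square)
  have "\<exists>z \<in> {0, 1/2, \<i>/2}. mk (phi z) (NN A B) \<noteq> 0"
  proof (rule ccontr)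
    assume "\<not> ?thesis"
    then have "n0 = 0" "-5/3*n0 + 4/3*n1 = 0" "-5/3*n0 + 4/3*n2 = 0"
      by (auto simp: p0 p1 p2 N mk_def)
    then show False using \<open>NN A B \<noteq> 0\<close> by (simp add: N zero_prod_def)
  qed
  moreover have "0 \<in> hdisk" "1/2 \<in> hdisk" "\<i>/2 \<in> hdisk" by (simp_all add: in_hdisk norm_divide)
  ultimately obtain z where z: "z \<in> hdisk" "mk (phi z) (NN A B) \<noteq> 0" by blast
  have "sig A B (phi z) \<noteq> phi z" using z(2) \<open>NN A B \<noteq> 0\<close> NN_pos by (simp add: sig_def)
  then have "rfl A B z \<noteq> z" using rfl_in[OF z(1)] by auto
  moreover have "h_id z = z" using z(1) by (simp add: h_id_def)
  ultimately show ?thesis by auto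
qed

lemma iso_mk:
  assumes "h_isometry f" "z \<in> hdisk" "w \<in> hdisk"
  shows "mk (phi (f z)) (phi (f w)) = mk (phi z) (phi w)" "f z \<in> hdisk"
proof -
  have fz: "f z \<in> hdisk" "f w \<in> hdisk" using assms by (auto simp: h_isometry_def)
  then show "f z \<in> hdisk" by simp
  have "hdist (f z) (f w) = hdist z w" using assms by (simp add: h_isometry_def)
  then have "- mk (phi (f z)) (phi (f w)) = cosh (hdist z w)" using hdist_iso_mk[OF fz] by simp
  moreover have "- mk (phi z) (phi w) = cosh (hdist z w)" using hdist_iso_mk[OF assms(2,3)] by simp
  ultimately show "mk (phi (f z)) (phi (f w)) = mk (phi z) (phi w)" by simp
qed

lemma fix_dichotomy:
  assumes f: "h_isometry f" and fx: "\<forall>x\<in>PL A B. f x = x" and z: "z \<in> hdisk"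
  shows "f z = z \<or> f z = rfl A B z"
proof -
  have AP: "A \<in> PL A B" "B \<in> PL A B" using geo_exists[OF A B AB] by auto
  define X where "X = phi z"
  define X' where "X' = phi (f z)"
  define Z where "Z = X' - X"
  have "mk X' (phi A) = mk X (phi A)" using iso_mk[OF f z A] fx AP by (simp add: X_def X'_def)
  then have ZA: "mk Z (phi A) = 0" by (simp add: Z_def mk_lin)
  have "mk X' (phi B) = mk X (phi B)" using iso_mk[OF f z B] fx AP by (simp add: X_def X'_def)
  then have ZB: "mk Z (phi B) = 0" by (simp add: Z_def mk_lin)
  define w where "w = cr (phi A) (phi B)"
  have "w \<noteq> 0" using NN_pos by (auto simp: w_def NN_def jf_def mk_def zero_prod_def)
  then have wp: "edot w w > 0" by (rule edot_pos)
  define lam where "lam = edot (jf Z) w / edot w w"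
  have eq: "edot w w *\<^sub>R Z = edot (jf Z) w *\<^sub>R NN A B" using orth_line[OF ZA ZB] by (simp add: w_def NN_def)
  have "Z = (1 / edot w w) *\<^sub>R (edot w w *\<^sub>R Z)" using wp by simp
  also have "\<dots> = lam *\<^sub>R NN A B" unfolding eq by (simp add: lam_def)
  finally have Zl: "Z = lam *\<^sub>R NN A B" .
  have XX: "mk X X = -1" "mk X' X' = -1" using phi_upper z iso_mk(2)[OF f z z] in_hdisk
    by (auto simp: X_def X'_def upper_def)
  have X': "X' = X + lam *\<^sub>R NN A B" using Zl by (simp add: Z_def algebra_simps)
  have "mk X' X' = mk X X + lam * (2 * mk X (NN A B) + lam * mk (NN A B) (NN A B))"
    unfolding X' by (simp add: mk_lin mk_sym[of "NN A B" X] algebra_simps)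
  then have "lam * (2 * mk X (NN A B) + lam * mk (NN A B) (NN A B)) = 0" using XX by simp
  then have "lam = 0 \<or> 2 * mk X (NN A B) + lam * mk (NN A B) (NN A B) = 0" by simp
  then have "lam = 0 \<or> lam = - (2 * mk X (NN A B) / mk (NN A B) (NN A B))"
  proof (elim disjE)
    assume h: "2 * mk X (NN A B) + lam * mk (NN A B) (NN A B) = 0"
    have "lam = - (2 * mk X (NN A B) / mk (NN A B) (NN A B))"
      using NN_pos h by (simp add: field_simps)
    then show ?thesis by blast
  qed simp
  then have "X' = X \<or> X' = sig A B X" using X' by (auto simp: sig_def)
  moreover have "f z \<in> hdisk" using iso_mk(2)[OF f z z] .
  ultimately show ?thesis using rfl_in[OF z] phi_inj in_hdisk z by (auto simp: X_def X'_def)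
qed

lemma refl_unique:
  assumes f: "h_isometry f" and fx: "\<forall>x\<in>PL A B. f x = x" and nid: "f \<noteq> h_id"
  shows "f = rfl A B"
proof -
  define K where "K z = mk (phi z) (NN A B)" for z
  have same: "rfl A B z = z" if "z \<in> hdisk" "K z = 0" for z
    using rfl_in[OF that(1)] that sig_fix phi_inj[of "rfl A B z" z] in_hdisk by (auto simp: K_def)
  have no_mix: False if z1: "z1 \<in> hdisk" "K z1 \<noteq> 0" "f z1 = z1"
      and z2: "z2 \<in> hdisk" "K z2 \<noteq> 0" "f z2 = rfl A B z2" for z1 z2
  proof -
    have "mk (phi (f z1)) (phi (f z2)) = mk (phi z1) (phi z2)" using iso_mk[OF f z1(1) z2(1)] by simp
    moreover have "phi (f z2) = sig A B (phi z2)" using rfl_in[OF z2(1)] z2(3) by simp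
    ultimately have "mk (phi z1) (sig A B (phi z2)) = mk (phi z1) (phi z2)" using z1(3) by simp
    then have "2 * K z2 / mk (NN A B) (NN A B) * K z1 = 0"
      by (simp add: sig_def mk_lin K_def)
    then show False using z1(2) z2(2) NN_pos by simp
  qed
  have outside: "f z = undefined" "h_id z = undefined" "rfl A B z = undefined" if "z \<notin> hdisk" for z
    using f that by (auto simp: h_isometry_def h_id_def rfl_def PiE_def extensional_def)
  show ?thesis
  proof (cases "\<exists>z1\<in>hdisk. K z1 \<noteq> 0 \<and> f z1 = z1")
    case True
    then obtain z1 where z1: "z1 \<in> hdisk" "K z1 \<noteq> 0" "f z1 = z1" by blast
    have "f z = h_id z" for z
    proof (cases "z \<in> hdisk")
      case False then show ?thesis using outside by simp
    next
      case True
      then have d: "f z = z \<or> f z = rfl A B z" using fix_dichotomy[OF f fx] by blast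
      have "f z = z"
      proof (cases "K z = 0")
        case True then show ?thesis using d same \<open>z \<in> hdisk\<close> by auto
      next
        case False then show ?thesis using d no_mix[OF z1 \<open>z \<in> hdisk\<close> False] by blast
      qed
      then show ?thesis using True by (simp add: h_id_def)
    qed
    then show ?thesis using nid by auto
  next
    case False
    have "f z = rfl A B z" for z
    proof (cases "z \<in> hdisk")
      case False then show ?thesis using outside by simp
    next
      case True
      then have d: "f z = z \<or> f z = rfl A B z" using fix_dichotomy[OF f fx] by blast
      show ?thesis
      proof (cases "K z = 0")
        case True then show ?thesis using d same \<open>z \<in> hdisk\<close> by auto
      next
        case Kz: False then show ?thesis using d \<open>\<not> (\<exists>z1\<in>hdisk. K z1 \<noteq> 0 \<and> f z1 = z1)\<close> True by blast
      qed
    qed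
    then show ?thesis by auto
  qed
qed

lemma reflection_eq: "reflection_in (geodesic_through A B) = rfl A B"
  unfolding geodesic_through_eq[OF A B AB] reflection_in_def
proof (rule the_equality)
  show "h_isometry (rfl A B) \<and> (\<forall>x\<in>PL A B. rfl A B x = x) \<and> rfl A B \<noteq> h_id"
    using rfl_iso rfl_fix rfl_not_id by blast
  fix f assume "h_isometry f \<and> (\<forall>x\<in>PL A B. f x = x) \<and> f \<noteq> h_id"
  then show "f = rfl A B" using refl_unique by blast
qed

end

lemma cv_mk2: "mk (cv p v s) (cv p' v' s) =
   cosh s * cosh s * mk p p' + cosh s * sinh s * (mk p v' + mk v p') + sinh s * sinh s * mk v v'"
  by (simp add: cv_def mk_lin algebra_simps)

lemma disp_alg:
  assumes fr: "frame p v" and fr': "frame p' v'" and L: "L \<ge> 0"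
    and d: "\<And>s. - mk (cv p v s) (cv p' v' s) = cosh L"
  shows "\<exists>t. \<bar>t\<bar> = L \<and> (\<forall>s. cv p' v' s = cv p v (s + t))"
proof -
  define C where "C = cosh L"
  have pp: "mk p p = -1" and vv: "mk v v = 1" and pv: "mk p v = 0" "mk v p = 0"
    using fr by (auto simp: frame_def upper_def mk_sym)
  have pp': "mk p' p' = -1" and vv': "mk v' v' = 1" and pv': "mk p' v' = 0" "mk v' p' = 0"
    using fr' by (auto simp: frame_def upper_def mk_sym)
  have a: "mk p p' = - C" using d[of 0] cv_mk2[of p v 0 p' v'] by (simp add: C_def)
  have f1: "cosh 1 * cosh 1 * mk p p' + cosh 1 * sinh 1 * (mk p v' + mk v p') + sinh 1 * sinh 1 * mk v v' = - C"
    using d[of 1] cv_mk2[of p v 1 p' v'] by (simp add: C_def)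
  have fm1: "cosh 1 * cosh 1 * mk p p' - cosh 1 * sinh 1 * (mk p v' + mk v p') + sinh 1 * sinh 1 * mk v v' = - C"
    using d[of "-1"] cv_mk2[of p v "-1" p' v'] by (simp add: C_def cosh_minus sinh_minus)
  have "cosh 1 * sinh 1 * (mk p v' + mk v p') = 0" using f1 fm1 by linarith
  then have b: "mk p v' = - mk v p'" by simp
  have "sinh 1 * sinh 1 * (mk v v' - C) = 0"
    using f1 b a ch2[of 1] by (simp add: algebra_simps)
  then have c: "mk v v' = C" by simp
  define \<beta> where "\<beta> = mk p' v"
  define r where "r = p' - C *\<^sub>R p - \<beta> *\<^sub>R v"
  define r' where "r' = v' - \<beta> *\<^sub>R p - C *\<^sub>R v"
  have vb: "mk v p' = \<beta>" by (simp add: \<beta>_def mk_sym)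
  have rp: "mk r p = 0" using pp pv a by (simp add: r_def mk_lin mk_sym[of p' p] \<beta>_def)
  have r'p: "mk r' p = 0" using pp pv b by (simp add: r'_def mk_lin mk_sym[of v' p] vb)
  have rr: "mk r r = C*C - 1 - \<beta>*\<beta>"
    using pp vv pv pp' a by (simp add: r_def mk_lin mk_sym[of p' p] vb \<beta>_def algebra_simps)
  have r'r': "mk r' r' = 1 + \<beta>*\<beta> - C*C"
    using pp vv pv vv' b c by (simp add: r'_def mk_lin mk_sym[of v' p] mk_sym[of v' v] vb algebra_simps)
  have "mk r r \<ge> 0" using mk_orth_nonneg(1)[OF pp rp] .
  moreover have "mk r' r' \<ge> 0" using mk_orth_nonneg(1)[OF pp r'p] .
  ultimately have bb: "\<beta>*\<beta> = C*C - 1" using rr r'r' by linarith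
  then have "mk r r = 0" "mk r' r' = 0" using rr r'r' by simp_all
  then have "r = 0" "r' = 0" using mk_orth_nonneg(2)[OF pp rp] mk_orth_nonneg(2)[OF pp r'p]
    by (cases "r = 0"; cases "r' = 0"; auto)+
  then have P': "p' = C *\<^sub>R p + \<beta> *\<^sub>R v" "v' = \<beta> *\<^sub>R p + C *\<^sub>R v"
    by (simp_all add: r_def r'_def algebra_simps)
  have sL: "sinh L * sinh L = \<beta> * \<beta>" using bb ch2[of L] by (simp add: C_def)
  have sL0: "sinh L \<ge> 0" using L by simp
  define t where "t = (if \<beta> \<ge> 0 then L else - L)"
  have st: "sinh t = \<beta>"
  proof (cases "\<beta> \<ge> 0")
    case True
    have "sinh L = \<beta>" by (rule power2_eq_imp_eq) (use True sL sL0 in \<open>simp_all add: power2_eq_square\<close>)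
    then show ?thesis using True by (simp add: t_def)
  next
    case False
    have "sinh L = - \<beta>" by (rule power2_eq_imp_eq) (use False sL sL0 in \<open>simp_all add: power2_eq_square\<close>)
    then show ?thesis using False by (simp add: t_def sinh_minus)
  qed
  have ct: "cosh t = C" by (simp add: t_def C_def cosh_minus)
  have "cv p' v' s = cv p v (s + t)" for s
    unfolding P' cv_def cosh_add sinh_add st[symmetric] ct[symmetric] by (simp add: algebra_simps)
  moreover have "\<bar>t\<bar> = L" using L by (simp add: t_def)
  ultimately show ?thesis by blast
qed

lemma axis:
  assumes g: "h_isometry g" and xi: "geodesic_line \<xi>" and L: "L \<ge> 0"
    and disp: "\<forall>x\<in>\<xi>. hdist x (g x) = L" and x: "x \<in> \<xi>"
  shows "hdist x ((g ^^ k) x) = real k * L"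
proof -
  obtain \<gamma> where gm: "\<forall>s. \<gamma> s \<in> hdisk" "\<forall>s t. hdist (\<gamma> s) (\<gamma> t) = \<bar>s - t\<bar>" "\<xi> = range \<gamma>"
    using xi unfolding geodesic_line_def by blast
  obtain p v where fr: "frame p v" and pc: "\<forall>s. phi (\<gamma> s) = cv p v s" using geo_param[OF gm(1,2)] by blast
  have g1: "\<forall>s. g (\<gamma> s) \<in> hdisk" using g gm(1) by (auto simp: h_isometry_def)
  have g2: "\<forall>s t. hdist (g (\<gamma> s)) (g (\<gamma> t)) = \<bar>s - t\<bar>" using g gm(1,2) by (simp add: h_isometry_def)
  obtain p' v' where fr': "frame p' v'" and pc': "\<forall>s. phi (g (\<gamma> s)) = cv p' v' s"
    using geo_param[OF g1 g2] by blast
  have "- mk (cv p v s) (cv p' v' s) = cosh L" for s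
    using hdist_iso_mk[of "\<gamma> s" "g (\<gamma> s)" L] gm disp pc pc' g1 by auto
  then obtain t where t: "\<bar>t\<bar> = L" "\<forall>s. cv p' v' s = cv p v (s + t)" using disp_alg[OF fr fr' L] by blast
  have step: "g (\<gamma> s) = \<gamma> (s + t)" for s
    using phi_inj[of "g (\<gamma> s)" "\<gamma> (s + t)"] pc pc' t(2) g1 gm(1) in_hdisk by simp
  have it: "(g ^^ k) (\<gamma> s) = \<gamma> (s + real k * t)" for s
    by (induction k) (simp_all add: step algebra_simps)
  obtain s where "x = \<gamma> s" using x gm(3) by auto
  then have "hdist x ((g ^^ k) x) = \<bar>s - (s + real k * t)\<bar>" using it gm(2) by simp
  also have "\<dots> = real k * L" using t(1) by (simp add: abs_mult)
  finally show ?thesis .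
qed

lemma cot_prod_gt1:
  fixes a b :: real
  assumes "0 < a" "0 < b" "a + b < pi/2"
  shows "cot a * cot b > 1"
proof -
  have a2: "a < pi/2" "b < pi/2" using assms by auto
  have sa: "sin a > 0" "sin b > 0" using assms a2 by (auto intro!: sin_gt_zero)
  have "cos (a + b) > 0" using assms by (intro cos_gt_zero) auto
  then have "cos a * cos b > sin a * sin b" by (simp add: cos_add)
  then have "(cos a * cos b) / (sin a * sin b) > 1" using sa by (simp add: pos_less_divide_eq)
  then show ?thesis by (simp add: cot_def)
qed

lemma vertex_facts:
  assumes "gamma_defined n m"
  shows "vertex n m i \<in> hdisk" "vertex n m i \<noteq> vertex n m (Suc i)"
proof -
  have n3: "n \<ge> 3" and m4: "m \<ge> 4" and ineq: "1 / real n + 1 / real m < 1/2"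
    using assms by (auto simp: gamma_defined_def)
  have "pi / real n + pi / real m < pi / 2"
  proof -
    have "pi * (1 / real n + 1 / real m) < pi * (1/2)" using ineq by simp
    then show ?thesis by (simp add: algebra_simps)
  qed
  then have c1: "cot (pi / real n) * cot (pi / real m) > 1" using n3 m4 by (intro cot_prod_gt1) auto
  define R where "R = circumradius n m"
  have "R > 0" using c1 by (simp add: R_def circumradius_def)
  then have t0: "tanh (R/2) \<noteq> 0" by simp
  have "\<bar>tanh (R/2)\<bar> < 1" using tanh_real_bounds[of "R/2"] by auto
  then show "vertex n m i \<in> hdisk" by (simp add: vertex_def in_hdisk norm_mult R_def)
  show "vertex n m i \<noteq> vertex n m (Suc i)"
  proof
    assume "vertex n m i = vertex n m (Suc i)"
    then have "cis (2 * pi * real i / real n) = cis (2 * pi * real (Suc i) / real n)"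
      using t0 by (simp add: vertex_def R_def)
    then have "cis (2 * pi * real (Suc i) / real n) / cis (2 * pi * real i / real n) = 1" by simp
    then have "cis (2 * pi * real (Suc i) / real n - 2 * pi * real i / real n) = 1" by (simp add: cis_divide)
    moreover have "2 * pi * real (Suc i) / real n - 2 * pi * real i / real n = 2 * pi / real n"
      by (simp add: field_simps add_divide_distrib)
    ultimately have "cos (2 * pi / real n) = 1" by (metis cis.sel(1) one_complex.sel(1))
    then obtain k :: int where k: "2 * pi / real n = k * 2 * pi" by (auto simp: cos_one_2pi_int)
    then have "pi * (2 / real n) = pi * (k * 2)" by (simp add: mult.commute mult.left_commute)
    then have "2 / real n = k * 2" using n3 by (simp add: field_simps)
    then have "1 / real n = k" by simp
    moreover have "0 < 1 / real n" "1 / real n < 1" using n3 by auto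
    ultimately have "0 < k" "k < 1" by simp_all
    then show False by simp
  qed
qed

lemma refl_iso:
  assumes "gamma_defined n m"
  shows "h_isometry (refl n m i)"
proof -
  interpret two_pts "vertex n m i" "vertex n m (Suc i)"
    using vertex_facts[OF assms] by unfold_locales auto
  show ?thesis unfolding refl_def reflection_eq by (rule rfl_iso)
qed

definition Fw :: "nat \<Rightarrow> nat \<Rightarrow> nat list \<Rightarrow> complex \<Rightarrow> complex" where
  "Fw n m w = foldr (\<lambda>i f. refl n m i \<circ> f) w id"

lemma Fw_append: "Fw n m (u @ v) = Fw n m u \<circ> Fw n m v"
proof -
  have "foldr (\<lambda>i f. refl n m i \<circ> f) u h = foldr (\<lambda>i f. refl n m i \<circ> f) u id \<circ> h" for h
    by (induction u) auto
  then show ?thesis by (simp add: Fw_def)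
qed

lemma Fw_iso:
  assumes "gamma_defined n m"
  shows "z \<in> hdisk \<Longrightarrow> Fw n m w z \<in> hdisk"
    and "z \<in> hdisk \<Longrightarrow> z' \<in> hdisk \<Longrightarrow> hdist (Fw n m w z) (Fw n m w z') = hdist z z'"
proof -
  have "\<forall>z\<in>hdisk. \<forall>z'\<in>hdisk. Fw n m w z \<in> hdisk \<and> hdist (Fw n m w z) (Fw n m w z') = hdist z z'"
  proof (induction w)
    case Nil then show ?case by (simp add: Fw_def)
  next
    case (Cons a w)
    have e: "Fw n m (a # w) = refl n m a \<circ> Fw n m w" by (simp add: Fw_def)
    show ?case using Cons refl_iso[OF assms, of a] unfolding e h_isometry_def by auto
  qed
  then show "z \<in> hdisk \<Longrightarrow> Fw n m w z \<in> hdisk"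
    and "z \<in> hdisk \<Longrightarrow> z' \<in> hdisk \<Longrightarrow> hdist (Fw n m w z) (Fw n m w z') = hdist z z'" by auto
qed

lemma word_elt_Fw: "word_elt n m w = restrict (Fw n m w) hdisk" by (simp add: word_elt_def Fw_def)

lemma word_iso:
  assumes "gamma_defined n m"
  shows "h_isometry (word_elt n m w)"
  unfolding h_isometry_def word_elt_Fw using Fw_iso[OF assms] by auto

lemma Fw_pow: "Fw n m (concat (replicate k w)) = Fw n m w ^^ k"
  by (induction k) (simp_all add: Fw_append, simp add: Fw_def)

lemma gpow_word:
  assumes "gamma_defined n m"
  shows "gpow (word_elt n m w) k = word_elt n m (concat (replicate k w))"
proof -
  have "z \<in> hdisk \<Longrightarrow> (restrict (Fw n m w) hdisk ^^ k) z = (Fw n m w ^^ k) z \<and> (Fw n m w ^^ k) z \<in> hdisk" for z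
    by (induction k) (simp_all add: Fw_iso[OF assms])
  then show ?thesis unfolding gpow_def word_elt_Fw Fw_pow by (auto intro!: restrict_ext)
qed

lemma gmult_ginv_id:
  assumes "G \<in> hdisk \<rightarrow>\<^sub>E hdisk"
  shows "gmult (ginv h_id) G = G"
proof -
  have i: "inv_into hdisk h_id z = z" if "z \<in> hdisk" for z
  proof -
    have "inj_on h_id hdisk" by (simp add: h_id_def inj_on_def)
    then have "inv_into hdisk h_id (h_id z) = z" using that by (simp add: inv_into_f_f)
    then show ?thesis using that by (simp add: h_id_def)
  qed
  show ?thesis
  proof
    fix z show "gmult (ginv h_id) G z = G z"
      using assms i by (cases "z \<in> hdisk") (auto simp: gmult_def ginv_def PiE_def extensional_def)
  qed
qed

lemma stake_meas:
  fixes \<mu> :: "'a::countable pmf"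
  shows "stake j \<in> measurable (stream_space (measure_pmf \<mu>)) (count_space UNIV)"
proof -
  have "sets (stream_space (measure_pmf \<mu>)) = sets (stream_space (count_space UNIV))"
    by (rule sets_stream_space_cong) simp
  then show ?thesis using measurable_stake by (simp add: measurable_cong_sets)
qed

lemma stake_set_meas:
  fixes \<mu> :: "'a::countable pmf"
  shows "{\<omega> \<in> space (stream_space (measure_pmf \<mu>)). stake j \<omega> \<in> T} \<in> sets (stream_space (measure_pmf \<mu>))"
proof -
  have "stake j -` T \<inter> space (stream_space (measure_pmf \<mu>)) \<in> sets (stream_space (measure_pmf \<mu>))"
    by (rule measurable_sets[OF stake_meas]) simp
  moreover have "stake j -` T \<inter> space (stream_space (measure_pmf \<mu>)) = {\<omega> \<in> space (stream_space (measure_pmf \<mu>)). stake j \<omega> \<in> T}"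
    by auto
  ultimately show ?thesis by simp
qed

lemma prob_stake:
  fixes \<mu> :: "'a::countable pmf"
  shows "measure (stream_space (measure_pmf \<mu>)) {\<omega> \<in> space (stream_space (measure_pmf \<mu>)). stake (length W) \<omega> = W}
     = prod_list (map (pmf \<mu>) W)"
proof (induction W)
  case Nil
  interpret S: prob_space "stream_space (measure_pmf \<mu>)"
    by (rule prob_space.prob_space_stream_space[OF prob_space_measure_pmf])
  show ?case by (simp add: S.prob_space)
next
  case (Cons a W)
  interpret M: prob_space "measure_pmf \<mu>" by (rule prob_space_measure_pmf)
  define q where "q = measure (stream_space (measure_pmf \<mu>)) {\<omega> \<in> space (stream_space (measure_pmf \<mu>)). stake (length W) \<omega> = W}"
  have ms: "{\<omega> \<in> space (stream_space (measure_pmf \<mu>)). stake (length (a # W)) \<omega> = a # W} \<in> sets (stream_space (measure_pmf \<mu>))"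
    using stake_set_meas[where j="length (a#W)" and T="{a # W}" and \<mu>=\<mu>] by simp
  have inner: "ennreal (measure (stream_space (measure_pmf \<mu>)) {\<omega> \<in> space (stream_space (measure_pmf \<mu>)). stake (length (a # W)) (t ## \<omega>) = a # W})
      = ennreal q * indicator {a} t" for t
    by (cases "t = a") (simp_all add: q_def)
  have "ennreal (measure (stream_space (measure_pmf \<mu>)) {\<omega> \<in> space (stream_space (measure_pmf \<mu>)). stake (length (a # W)) \<omega> = a # W})
      = (\<integral>\<^sup>+t. ennreal q * indicator {a} t \<partial>measure_pmf \<mu>)"
    using prob_space.prob_stream_space[OF prob_space_measure_pmf ms] inner by simp
  also have "\<dots> = ennreal q * emeasure (measure_pmf \<mu>) {a}" by (rule nn_integral_cmult_indicator) simp
  also have "\<dots> = ennreal (q * pmf \<mu> a)" by (simp add: emeasure_pmf_single ennreal_mult q_def)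
  finally have "measure (stream_space (measure_pmf \<mu>)) {\<omega> \<in> space (stream_space (measure_pmf \<mu>)). stake (length (a # W)) \<omega> = a # W} = q * pmf \<mu> a"
    by (subst (asm) ennreal_inj) (simp_all add: q_def)
  then show ?case using Cons by (simp add: q_def)
qed

lemma fe_lower:
  assumes "word_elt n m W = gmult (ginv x) y"
  shows "first_entrance n m \<mu> x y \<ge> prod_list (map (pmf \<mu>) W)"
proof -
  let ?S = "stream_space (measure_pmf \<mu>)"
  interpret S: prob_space ?S
    by (rule prob_space.prob_space_stream_space[OF prob_space_measure_pmf])
  define E where "E = {\<omega> \<in> space ?S. \<exists>k. word_elt n m (stake k \<omega>) = gmult (ginv x) y}"
  have "E = (\<Union>k. {\<omega> \<in> space ?S. stake k \<omega> \<in> {l. word_elt n m l = gmult (ginv x) y}})"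
    by (auto simp: E_def)
  also have "\<dots> \<in> sets ?S" using stake_set_meas by (intro sets.countable_UN) auto
  finally have Em: "E \<in> sets ?S" .
  have sub: "{\<omega> \<in> space ?S. stake (length W) \<omega> = W} \<subseteq> E" unfolding E_def using assms by (auto intro: exI[where x="length W"])
  have "prod_list (map (pmf \<mu>) W) = measure ?S {\<omega> \<in> space ?S. stake (length W) \<omega> = W}"
    by (rule prob_stake[symmetric])
  also have "\<dots> \<le> measure ?S E" using S.finite_measure_mono[OF sub Em] .
  finally show ?thesis by (simp add: first_entrance_def E_def)
qed

lemma hdist_sym: "hdist z w = hdist w z"
  by (simp add: hdist_def norm_minus_commute mult.commute)

lemma hdist_tri:
  assumes "a \<in> hdisk" "b \<in> hdisk" "c \<in> hdisk"
  shows "hdist a c \<le> hdist a b + hdist b c"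
  using hyp_triangle[OF phi_upper phi_upper phi_upper] assms hdist_mk in_hdisk by simp

lemma pow_iso:
  assumes "h_isometry g"
  shows "z \<in> hdisk \<Longrightarrow> (g ^^ k) z \<in> hdisk"
    and "z \<in> hdisk \<Longrightarrow> z' \<in> hdisk \<Longrightarrow> hdist ((g ^^ k) z) ((g ^^ k) z') = hdist z z'"
proof -
  have "\<forall>z\<in>hdisk. \<forall>z'\<in>hdisk. (g ^^ k) z \<in> hdisk \<and> hdist ((g ^^ k) z) ((g ^^ k) z') = hdist z z'"
    using assms by (induction k) (auto simp: h_isometry_def)
  then show "z \<in> hdisk \<Longrightarrow> (g ^^ k) z \<in> hdisk"
    and "z \<in> hdisk \<Longrightarrow> z' \<in> hdisk \<Longrightarrow> hdist ((g ^^ k) z) ((g ^^ k) z') = hdist z z'" by auto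
qed

lemma prod_list_rep: "prod_list (map f (concat (replicate k w))) = (prod_list (map f w)) ^ k"
  by (induction k) simp_all

theorem lemma3:
  fixes n m :: nat and \<mu> :: "nat pmf" and g :: "complex \<Rightarrow> complex"
    and \<xi> :: "complex set" and L :: real and w :: "nat list" and x0 :: complex
  assumes "gamma_defined n m"
    and "set_pmf \<mu> \<subseteq> {..<n}"
    and "\<forall>i<n. pmf \<mu> i > 0"
    and "g \<in> Gamma n m"
    and "geodesic_line \<xi>" and "L > 0" and "\<forall>x\<in>\<xi>. hdist x (g x) = L"
    and "w \<in> lists {..<n}" and "length w = word_length n m g" and "word_elt n m w = g"
    and "L > - (\<Sum>j<length w. ln (pmf \<mu> (w ! j)))"
    and "trivial_stabilizer n m x0"
  shows "(SUP k\<in>{1..}. ereal \<bar>green_dist n m \<mu> h_id (gpow g k) - geom_dist x0 h_id (gpow g k)\<bar>) = \<infinity>"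
proof -
  note gd = assms(1)
  define c where "c = - (\<Sum>j<length w. ln (pmf \<mu> (w ! j)))"
  define q where "q = prod_list (map (pmf \<mu>) w)"
  have wpos: "pmf \<mu> (w ! j) > 0" if "j < length w" for j
    using assms(3,8) that by (auto simp: lists_eq_set dest!: nth_mem)
  have q_eq: "q = (\<Prod>j<length w. pmf \<mu> (w ! j))" by (auto simp: q_def prod.list_conv_set_nth atLeast0LessThan intro!: prod.cong)
  have qpos: "q > 0" unfolding q_eq using wpos by (intro prod_pos) auto
  have lnq: "ln q = - c" unfolding q_eq c_def using wpos by (subst ln_prod) (auto, metis less_irrefl)
  have giso: "h_isometry g" using word_iso[OF gd, of w] assms(10) by simp
  have x0d: "x0 \<in> hdisk" using assms(12) by (simp add: trivial_stabilizer_def)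
  obtain x where x: "x \<in> \<xi>" "x \<in> hdisk" using assms(5) unfolding geodesic_line_def by auto
  define D where "D = hdist x x0"
  have green: "green_dist n m \<mu> h_id (gpow g k) \<le> real k * c" for k
  proof -
    define W where "W = concat (replicate k w)"
    have gw: "gpow g k = word_elt n m W" using gpow_word[OF gd, of w k] assms(10) by (simp add: W_def)
    have "gpow g k \<in> hdisk \<rightarrow>\<^sub>E hdisk" using word_iso[OF gd, of W] gw by (simp add: h_isometry_def)
    then have "word_elt n m W = gmult (ginv h_id) (gpow g k)" using gmult_ginv_id gw by simp
    then have fe: "first_entrance n m \<mu> h_id (gpow g k) \<ge> q ^ k"
      using fe_lower[of n m W h_id "gpow g k" \<mu>] by (simp add: W_def prod_list_rep q_def)
    have qk: "q ^ k > 0" using qpos by simp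
    have "ln (q ^ k) \<le> ln (first_entrance n m \<mu> h_id (gpow g k))" using fe qk by simp
    moreover have "ln (q ^ k) = real k * ln q" using qpos by (simp add: ln_realpow)
    ultimately show ?thesis using lnq by (simp add: green_dist_def)
  qed
  have geom: "geom_dist x0 h_id (gpow g k) \<ge> real k * L - 2 * D" for k
  proof -
    have gk: "geom_dist x0 h_id (gpow g k) = hdist x0 ((g ^^ k) x0)" using x0d by (simp add: geom_dist_def gpow_def h_id_def)
    have ax: "hdist x ((g ^^ k) x) = real k * L" using axis[OF giso assms(5) _ assms(7) x(1)] assms(6) by simp
    have "hdist x ((g ^^ k) x) \<le> hdist x x0 + hdist x0 ((g ^^ k) x)"
      using hdist_tri x(2) x0d pow_iso[OF giso] by blast
    also have "hdist x0 ((g ^^ k) x) \<le> hdist x0 ((g ^^ k) x0) + hdist ((g ^^ k) x0) ((g ^^ k) x)"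
      using hdist_tri x(2) x0d pow_iso[OF giso] by blast
    also have "hdist ((g ^^ k) x0) ((g ^^ k) x) = D" using pow_iso(2)[OF giso x0d x(2)] by (simp add: D_def hdist_sym)
    finally show ?thesis using ax gk by (simp add: D_def)
  qed
  have Lc: "L - c > 0" using assms(11) by (simp add: c_def)
  show ?thesis
  proof (rule SUP_PInfty)
    fix N :: nat
    define k where "k = nat \<lceil>(real N + 2 * D) / (L - c)\<rceil> + 1"
    have k1: "k \<in> {1..}" by (simp add: k_def)
    have "(real N + 2 * D) / (L - c) \<le> real k" unfolding k_def by linarith
    then have "real N + 2 * D \<le> real k * (L - c)" using Lc by (simp add: pos_divide_le_eq)
    then have "real N \<le> geom_dist x0 h_id (gpow g k) - green_dist n m \<mu> h_id (gpow g k)"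
      using green[of k] geom[of k] by (simp add: algebra_simps)
    then have "ereal (real N) \<le> ereal \<bar>green_dist n m \<mu> h_id (gpow g k) - geom_dist x0 h_id (gpow g k)\<bar>"
      by simp
    then show "\<exists>i\<in>{1..}. ereal (real N) \<le> ereal \<bar>green_dist n m \<mu> h_id (gpow g i) - geom_dist x0 h_id (gpow g i)\<bar>"
      using k1 by blast
  qed
qed

end
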